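(* The class of probe $P_5$-free graphs is a proper subclass of the class of $(C_7,C_9,C_{11},\ldots)$-free graphs; that is, every probe $P_5$-free graph contains no induced odd cycle of length at least $7$, and there exists a graph containing no induced odd cycle of length at least $7$ that is not probe $P_5$-free.
   Context: All graphs are finite and simple. $C_n$ is the cycle on $n$ vertices and $P_5$ the path on $5$ vertices. A graph is $H$-free if it has no induced subgraph isomorphic to $H$; $(C_7,C_9,C_{11},\ldots)$-free means $C_{2\ell+1}$-free for all $\ell\geq 3$. A graph $G=(V,E)$ is probe $P_5$-free if there is an independent set $N$ of $G$ and a set $F\subseteq\binom{N}{2}$ such that $(V,E\cup F)$ is $P_5$-free. *)

theory Defs
  imports Main
begin

definition simple_graph :: "'a set \<Rightarrow> 'a set set \<Rightarrow> bool" where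
  "simple_graph V E \<longleftrightarrow> finite V \<and>
     (\<forall>e\<in>E. \<exists>u v. e = {u, v} \<and> u \<noteq> v \<and> u \<in> V \<and> v \<in> V)"

definition has_induced :: "'a set \<Rightarrow> 'a set set \<Rightarrow> 'b set \<Rightarrow> 'b set set \<Rightarrow> bool" where
  "has_induced V E W F \<longleftrightarrow> (\<exists>f. inj_on f W \<and> f ` W \<subseteq> V \<and>
     (\<forall>x\<in>W. \<forall>y\<in>W. x \<noteq> y \<longrightarrow> ({f x, f y} \<in> E \<longleftrightarrow> {x, y} \<in> F)))"

definition H_free :: "'a set \<Rightarrow> 'a set set \<Rightarrow> 'b set \<Rightarrow> 'b set set \<Rightarrow> bool" where
  "H_free V E W F \<longleftrightarrow> \<not> has_induced V E W F"

definition cycle_V :: "nat \<Rightarrow> nat set" where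
  "cycle_V n = {0..<n}"
definition cycle_E :: "nat \<Rightarrow> nat set set" where
  "cycle_E n = {{i, (i + 1) mod n} | i. i < n}"

definition path_V :: "nat \<Rightarrow> nat set" where
  "path_V n = {0..<n}"
definition path_E :: "nat \<Rightarrow> nat set set" where
  "path_E n = {{i, Suc i} | i. Suc i < n}"

definition long_odd_cycle_free :: "'a set \<Rightarrow> 'a set set \<Rightarrow> bool" where
  "long_odd_cycle_free V E \<longleftrightarrow>
     (\<forall>l::nat. l \<ge> 3 \<longrightarrow> H_free V E (cycle_V (2*l+1)) (cycle_E (2*l+1)))"

definition independent_set :: "'a set \<Rightarrow> 'a set set \<Rightarrow> 'a set \<Rightarrow> bool" where
  "independent_set V E N \<longleftrightarrow> N \<subseteq> V \<and> (\<forall>u\<in>N. \<forall>v\<in>N. {u, v} \<notin> E)"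

definition probe_P5_free :: "'a set \<Rightarrow> 'a set set \<Rightarrow> bool" where
  "probe_P5_free V E \<longleftrightarrow> (\<exists>N F. independent_set V E N \<and>
     F \<subseteq> {{u, v} | u v. u \<in> N \<and> v \<in> N \<and> u \<noteq> v} \<and>
     H_free V (E \<union> F) (path_V 5) (path_E 5))"

end

theory Submission
  imports Defs
begin

lemma pathE5: "{x,y} \<in> path_E 5 \<longleftrightarrow> (y = Suc x \<and> Suc x < 5) \<or> (x = Suc y \<and> Suc y < 5)"
  unfolding path_E_def by (auto simp: doubleton_eq_iff)

lemma P5I:
  assumes "distinct [a,b,c,d,e]" "{a,b,c,d,e} \<subseteq> V"
    "{a,b}\<in>E" "{b,c}\<in>E" "{c,d}\<in>E" "{d,e}\<in>E"
    "{a,c}\<notin>E" "{a,d}\<notin>E" "{a,e}\<notin>E" "{b,d}\<notin>E" "{b,e}\<notin>E" "{c,e}\<notin>E"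
  shows "has_induced V E (path_V 5) (path_E 5)"
  unfolding has_induced_def
proof (intro exI[of _ "\<lambda>i. [a,b,c,d,e]!i"] conjI ballI impI)
  have U: "path_V 5 = {0,1,2,3,4}" by (auto simp: path_V_def)
  show "inj_on (\<lambda>i. [a,b,c,d,e]!i) (path_V 5)" using assms(1) unfolding U inj_on_def by auto
  show "(\<lambda>i. [a,b,c,d,e]!i) ` path_V 5 \<subseteq> V" using assms(2) unfolding U by auto
  fix x y assume "x \<in> path_V 5" "y \<in> path_V 5" "x \<noteq> y"
  then have "x \<in> {0,1,2,3,4}" "y \<in> {0,1,2,3,4}" "x \<noteq> y" unfolding U by auto
  then show "({[a, b, c, d, e] ! x, [a, b, c, d, e] ! y} \<in> E) = ({x, y} \<in> path_E 5)"
    unfolding pathE5 using assms(3-) by (elim insertE; simp add: insert_commute)+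
qed

lemma cycE: "{x,y} \<in> cycle_E n \<longleftrightarrow> (\<exists>i<n. {x,y} = {i, (i+1) mod n})"
  unfolding cycle_E_def by auto

lemma mod_eq_small: fixes a t n :: nat
  assumes "(a + t) mod n = a mod n" "0 < t" "t < n" shows False
proof -
  have "n dvd (a + t) - a" using assms(1) mod_eq_dvd_iff_nat[of a "a+t" n] by simp
  then have "n dvd t" by simp
  thus False using assms(2,3) by (auto dest: dvd_imp_le)
qed

lemma cyc_adj: assumes "n \<ge> 2" shows
  "{(b+k) mod n, (b+k+1) mod n} \<in> cycle_E n \<and> (b+k) mod n \<noteq> (b+k+1) mod n"
proof
  show "{(b+k) mod n, (b+k+1) mod n} \<in> cycle_E n" unfolding cycE
    using assms by (intro exI[of _ "(b+k) mod n"]) (auto simp: mod_Suc_eq)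
  show "(b+k) mod n \<noteq> (b+k+1) mod n" using mod_eq_small[of "b+k" 1 n] assms by auto
qed

lemma cyc_nonadj: assumes "n \<ge> 7" "2 \<le> d" "d \<le> 5" shows
  "(b+k) mod n \<noteq> (b+k+d) mod n \<and> {(b+k) mod n, (b+k+d) mod n} \<notin> cycle_E n"
proof
  show "(b+k) mod n \<noteq> (b+k+d) mod n" using mod_eq_small[of "b+k" d n] assms by auto
  show "{(b+k) mod n, (b+k+d) mod n} \<notin> cycle_E n"
  proof
    assume "{(b+k) mod n, (b+k+d) mod n} \<in> cycle_E n"
    then obtain i where i: "i < n" "{(b+k) mod n, (b+k+d) mod n} = {i, (i+1) mod n}"
      unfolding cycE by blast
    then consider "(b+k) mod n = i" "(b+k+d) mod n = (i+1) mod n"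
      | "(b+k) mod n = (i+1) mod n" "(b+k+d) mod n = i"
      by (auto simp: doubleton_eq_iff)
    then show False
    proof cases
      case 1
      have e: "b+k+d = b+k+1+(d-1)" using assms by simp
      have h1: "(i+1) mod n = (b+k+1) mod n" by (simp add: 1(1)[symmetric] mod_Suc_eq)
      have h2: "(b+k+1+(d-1)) mod n = (i+1) mod n" using 1(2) by (simp only: e)
      have "(b+k+1 + (d-1)) mod n = (b+k+1) mod n" using h2 h1 by (rule trans)
      then show False by (rule mod_eq_small) (use assms in auto)
    next
      case 2
      have "(b+k+d+1) mod n = (i+1) mod n" by (simp add: 2(2)[symmetric] mod_Suc_eq)
      then have "(b+k+d+1) mod n = (b+k) mod n" using 2(1) by simp
      then have "(b+k + (d+1)) mod n = (b+k) mod n" by (simp add: add.assoc)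
      then show False using mod_eq_small[of "b+k" "d+1" n] assms by auto
    qed
  qed
qed

lemma odd_anchor: fixes M :: "nat set"
  assumes "odd n" "\<forall>i<n. \<not> (i \<in> M \<and> (i+1) mod n \<in> M)"
  shows "\<exists>i<n. i \<notin> M \<and> (i+1) mod n \<notin> M"
proof (rule ccontr)
  assume "\<not> ?thesis"
  then have alt: "\<forall>i<n. ((i+1) mod n \<in> M \<longleftrightarrow> i \<notin> M)" using assms(2) by blast
  have "\<forall>i. i \<le> n \<longrightarrow> (i mod n \<in> M \<longleftrightarrow> (0 \<in> M \<longleftrightarrow> even i))"
  proof
    fix i show "i \<le> n \<longrightarrow> (i mod n \<in> M \<longleftrightarrow> (0 \<in> M \<longleftrightarrow> even i))"
    proof (induction i)
      case 0 then show ?case by simp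
    next
      case (Suc i)
      show ?case
      proof
        assume "Suc i \<le> n"
        then have "i < n" by simp
        then have "i mod n = i" by simp
        with Suc.IH `i < n` alt show "Suc i mod n \<in> M \<longleftrightarrow> (0 \<in> M \<longleftrightarrow> even (Suc i))"
          using Suc_eq_plus1 even_Suc less_imp_le by (smt (verit))
      qed
    qed
  qed
  then have "0 \<in> M \<longleftrightarrow> (0 \<in> M \<longleftrightarrow> even n)" by (metis le_refl mod_self)
  then show False using assms(1) by blast
qed

lemma part1:
  assumes "simple_graph V E" "probe_P5_free V E"
  shows "long_odd_cycle_free V E"
  unfolding long_odd_cycle_free_def
proof (intro allI impI)
  fix l :: nat assume l3: "l \<ge> 3"
  define n where "n = 2*l+1"
  have n7: "n \<ge> 7" and nodd: "odd n" using l3 by (auto simp: n_def)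
  obtain N F where ind: "independent_set V E N"
    and Fs: "F \<subseteq> {{u, v} | u v. u \<in> N \<and> v \<in> N \<and> u \<noteq> v}"
    and P5f: "H_free V (E \<union> F) (path_V 5) (path_E 5)"
    using assms(2) unfolding probe_P5_free_def by blast
  have Fneg: "x \<in> N \<and> y \<in> N" if xy: "{x,y} \<in> F" for x y
  proof -
    obtain u v where uv: "{x,y} = {u,v}" "u \<in> N" "v \<in> N" using Fs xy by blast
    have "x \<in> {u,v}" "y \<in> {u,v}" using uv(1) by blast+
    then show ?thesis using uv by blast
  qed
  have indep: "\<And>u v. u \<in> N \<Longrightarrow> v \<in> N \<Longrightarrow> {u,v} \<notin> E"
    using ind unfolding independent_set_def by blast
  show "H_free V E (cycle_V (2*l+1)) (cycle_E (2*l+1))"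
    unfolding H_free_def n_def[symmetric]
  proof
    assume "has_induced V E (cycle_V n) (cycle_E n)"
    then obtain g where ginj: "inj_on g {0..<n}" and gV: "g ` {0..<n} \<subseteq> V"
      and gE0: "\<forall>x\<in>{0..<n}. \<forall>y\<in>{0..<n}. x \<noteq> y \<longrightarrow>
           ({g x, g y} \<in> E \<longleftrightarrow> {x, y} \<in> cycle_E n)"
      unfolding has_induced_def cycle_V_def by (elim exE conjE) (rule that)
    have gE: "({g x, g y} \<in> E \<longleftrightarrow> {x, y} \<in> cycle_E n)"
      if "x \<in> {0..<n}" "y \<in> {0..<n}" "x \<noteq> y" for x y
      using gE0 that by simp
    have "\<forall>i<n. \<not> (i \<in> {i. g i \<in> N} \<and> (i+1) mod n \<in> {i. g i \<in> N})"
    proof (intro allI impI notI)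
      fix i assume i: "i < n" and h: "i \<in> {i. g i \<in> N} \<and> (i+1) mod n \<in> {i. g i \<in> N}"
      have "{i mod n, (i+1) mod n} \<in> cycle_E n \<and> i mod n \<noteq> (i+1) mod n"
        using cyc_adj[of n i 0] n7 by simp
      then have "{g i, g ((i+1) mod n)} \<in> E" using gE[of i "(i+1) mod n"] i n7 by simp
      then show False using indep h by blast
    qed
    then obtain i where i: "i < n" "g i \<notin> N" "g ((i+1) mod n) \<notin> N"
      using odd_anchor[OF nodd] by blast
    define b where "b = i + n - 4"
    define c where "c k = g ((b+k) mod n)" for k
    have b4: "(b+4) mod n = i" using i n7 by (simp add: b_def)
    have "b+5 = (i+1) + n" using n7 by (simp add: b_def)
    then have b5: "(b+5) mod n = (i+1) mod n" by (metis mod_add_self2)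
    have c4: "c 4 \<notin> N" and c5: "c 5 \<notin> N" using i b4 b5 by (simp_all add: c_def)
    have cV: "\<And>k. c k \<in> V" using gV n7 by (auto simp: c_def)
    have adj: "c k \<noteq> c (k+1) \<and> {c k, c (k+1)} \<in> E" for k
    proof -
      let ?x = "(b+k) mod n" let ?y = "(b+k+1) mod n"
      have xy: "?x < n" "?y < n" using n7 by auto
      have cy: "{?x,?y} \<in> cycle_E n" "?x \<noteq> ?y" using cyc_adj[of n b k] n7 by auto
      have "g ?x \<noteq> g ?y" using inj_onD[OF ginj, of ?x ?y] xy cy(2) by auto
      moreover have "{g ?x, g ?y} \<in> E" using gE[of ?x ?y] xy cy by auto
      ultimately show ?thesis unfolding c_def by (simp add: add.assoc)
    qed
    have nadj: "c k \<noteq> c (k+d) \<and> {c k, c (k+d)} \<notin> E" if d: "2 \<le> d" "d \<le> 5" for d k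
    proof -
      let ?x = "(b+k) mod n" let ?y = "(b+k+d) mod n"
      have xy: "?x < n" "?y < n" using n7 by auto
      have cy: "{?x,?y} \<notin> cycle_E n" "?x \<noteq> ?y" using cyc_nonadj[of n d b k] n7 d by auto
      have "g ?x \<noteq> g ?y" using inj_onD[OF ginj, of ?x ?y] xy cy(2) by auto
      moreover have "{g ?x, g ?y} \<notin> E" using gE[of ?x ?y] xy cy by auto
      ultimately show ?thesis unfolding c_def by (simp add: add.assoc)
    qed
    have nadj2: "c k \<noteq> c m \<and> {c k, c m} \<notin> E" if "k+2 \<le> m" "m \<le> k+5" for k m
      using nadj[of "m-k" k] that by simp
    have adj2: "c k \<noteq> c m \<and> {c k, c m} \<in> E" if "m = k+1" for k m
      using adj[of k] that by simp
    have FnL: "\<And>x y. x \<notin> N \<Longrightarrow> {x,y} \<notin> F" and FnR: "\<And>x y. y \<notin> N \<Longrightarrow> {x,y} \<notin> F"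
      using Fneg by blast+
    have Nind: "\<And>k. c k \<in> N \<Longrightarrow> c (k+1) \<notin> N" using adj indep by blast
    have a01: "c 0 \<noteq> c 1" "c 1 \<noteq> c 0" "{c 0, c 1} \<in> E" "{c 1, c 0} \<in> E" using adj2[where k=0 and m=1] by (auto simp: insert_commute)
    have a02: "c 0 \<noteq> c 2" "c 2 \<noteq> c 0" "{c 0, c 2} \<notin> E" "{c 2, c 0} \<notin> E" using nadj2[where k=0 and m=2] by (auto simp: insert_commute)
    have a03: "c 0 \<noteq> c 3" "c 3 \<noteq> c 0" "{c 0, c 3} \<notin> E" "{c 3, c 0} \<notin> E" using nadj2[where k=0 and m=3] by (auto simp: insert_commute)
    have a04: "c 0 \<noteq> c 4" "c 4 \<noteq> c 0" "{c 0, c 4} \<notin> E" "{c 4, c 0} \<notin> E" using nadj2[where k=0 and m=4] by (auto simp: insert_commute)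
    have a05: "c 0 \<noteq> c 5" "c 5 \<noteq> c 0" "{c 0, c 5} \<notin> E" "{c 5, c 0} \<notin> E" using nadj2[where k=0 and m=5] by (auto simp: insert_commute)
    have a12: "c 1 \<noteq> c 2" "c 2 \<noteq> c 1" "{c 1, c 2} \<in> E" "{c 2, c 1} \<in> E" using adj2[where k=1 and m=2] by (auto simp: insert_commute)
    have a13: "c 1 \<noteq> c 3" "c 3 \<noteq> c 1" "{c 1, c 3} \<notin> E" "{c 3, c 1} \<notin> E" using nadj2[where k=1 and m=3] by (auto simp: insert_commute)
    have a14: "c 1 \<noteq> c 4" "c 4 \<noteq> c 1" "{c 1, c 4} \<notin> E" "{c 4, c 1} \<notin> E" using nadj2[where k=1 and m=4] by (auto simp: insert_commute)
    have a15: "c 1 \<noteq> c 5" "c 5 \<noteq> c 1" "{c 1, c 5} \<notin> E" "{c 5, c 1} \<notin> E" using nadj2[where k=1 and m=5] by (auto simp: insert_commute)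
    have a16: "c 1 \<noteq> c 6" "c 6 \<noteq> c 1" "{c 1, c 6} \<notin> E" "{c 6, c 1} \<notin> E" using nadj2[where k=1 and m=6] by (auto simp: insert_commute)
    have a23: "c 2 \<noteq> c 3" "c 3 \<noteq> c 2" "{c 2, c 3} \<in> E" "{c 3, c 2} \<in> E" using adj2[where k=2 and m=3] by (auto simp: insert_commute)
    have a24: "c 2 \<noteq> c 4" "c 4 \<noteq> c 2" "{c 2, c 4} \<notin> E" "{c 4, c 2} \<notin> E" using nadj2[where k=2 and m=4] by (auto simp: insert_commute)
    have a25: "c 2 \<noteq> c 5" "c 5 \<noteq> c 2" "{c 2, c 5} \<notin> E" "{c 5, c 2} \<notin> E" using nadj2[where k=2 and m=5] by (auto simp: insert_commute)
    have a26: "c 2 \<noteq> c 6" "c 6 \<noteq> c 2" "{c 2, c 6} \<notin> E" "{c 6, c 2} \<notin> E" using nadj2[where k=2 and m=6] by (auto simp: insert_commute)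
    have a27: "c 2 \<noteq> c 7" "c 7 \<noteq> c 2" "{c 2, c 7} \<notin> E" "{c 7, c 2} \<notin> E" using nadj2[where k=2 and m=7] by (auto simp: insert_commute)
    have a34: "c 3 \<noteq> c 4" "c 4 \<noteq> c 3" "{c 3, c 4} \<in> E" "{c 4, c 3} \<in> E" using adj2[where k=3 and m=4] by (auto simp: insert_commute)
    have a35: "c 3 \<noteq> c 5" "c 5 \<noteq> c 3" "{c 3, c 5} \<notin> E" "{c 5, c 3} \<notin> E" using nadj2[where k=3 and m=5] by (auto simp: insert_commute)
    have a36: "c 3 \<noteq> c 6" "c 6 \<noteq> c 3" "{c 3, c 6} \<notin> E" "{c 6, c 3} \<notin> E" using nadj2[where k=3 and m=6] by (auto simp: insert_commute)
    have a37: "c 3 \<noteq> c 7" "c 7 \<noteq> c 3" "{c 3, c 7} \<notin> E" "{c 7, c 3} \<notin> E" using nadj2[where k=3 and m=7] by (auto simp: insert_commute)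
    have a45: "c 4 \<noteq> c 5" "c 5 \<noteq> c 4" "{c 4, c 5} \<in> E" "{c 5, c 4} \<in> E" using adj2[where k=4 and m=5] by (auto simp: insert_commute)
    have a46: "c 4 \<noteq> c 6" "c 6 \<noteq> c 4" "{c 4, c 6} \<notin> E" "{c 6, c 4} \<notin> E" using nadj2[where k=4 and m=6] by (auto simp: insert_commute)
    have a47: "c 4 \<noteq> c 7" "c 7 \<noteq> c 4" "{c 4, c 7} \<notin> E" "{c 7, c 4} \<notin> E" using nadj2[where k=4 and m=7] by (auto simp: insert_commute)
    have a56: "c 5 \<noteq> c 6" "c 6 \<noteq> c 5" "{c 5, c 6} \<in> E" "{c 6, c 5} \<in> E" using adj2[where k=5 and m=6] by (auto simp: insert_commute)
    have a57: "c 5 \<noteq> c 7" "c 7 \<noteq> c 5" "{c 5, c 7} \<notin> E" "{c 7, c 5} \<notin> E" using nadj2[where k=5 and m=7] by (auto simp: insert_commute)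
    have a67: "c 6 \<noteq> c 7" "c 7 \<noteq> c 6" "{c 6, c 7} \<in> E" "{c 7, c 6} \<in> E" using adj2[where k=6 and m=7] by (auto simp: insert_commute)
    note W = a01 a02 a03 a04 a05 a12 a13 a14 a15 a16 a23 a24 a25 a26 a27 a34 a35 a36 a37 a45 a46 a47 a56 a57 a67
    have P5: "has_induced V (E \<union> F) (path_V 5) (path_E 5)"
    proof (cases "c 3 \<in> N")
      case False
      show ?thesis by (rule P5I[of "c 3" "c 4" "c 5" "c 6" "c 7"])
        (simp_all add: W W[simplified] cV c4 c5 False FnL FnR)
    next
      case c3: True
      show ?thesis
      proof (cases "c 6 \<in> N")
        case False
        show ?thesis by (rule P5I[of "c 2" "c 3" "c 4" "c 5" "c 6"])
          (simp_all add: W W[simplified] cV c4 c5 False FnL FnR)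
      next
        case c6: True
        have c2: "c 2 \<notin> N" using a23 indep c3 by blast
        show ?thesis
        proof (cases "{c 3, c 6} \<in> F")
          case False
          show ?thesis by (rule P5I[of "c 2" "c 3" "c 4" "c 5" "c 6"])
            (simp_all add: W W[simplified] cV c2 c4 c5 False FnL FnR)
        next
          case F36: True
          have F63: "{c 6, c 3} \<in> F" using F36 by (simp add: insert_commute)
          show ?thesis
          proof (cases "c 1 \<in> N")
            case False
            show ?thesis by (rule P5I[of "c 5" "c 6" "c 3" "c 2" "c 1"])
              (simp_all add: W W[simplified] cV c2 c4 c5 F63 False False[simplified] FnL FnR)
          next
            case c1: True
            have c0: "c 0 \<notin> N" using a01 indep c1 by blast
            show ?thesis
            proof (cases "{c 1, c 3} \<in> F")
              case False
              show ?thesis by (rule P5I[of "c 1" "c 2" "c 3" "c 4" "c 5"])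
                (simp_all add: W W[simplified] cV c2 c4 c5 False False[simplified] FnL FnR)
            next
              case True
              have F31: "{c 3, c 1} \<in> F" using True by (simp add: insert_commute)
              show ?thesis by (rule P5I[of "c 5" "c 4" "c 3" "c 1" "c 0"])
                (simp_all add: W W[simplified] cV c0 c2 c4 c5 F31 F31[simplified] True FnL FnR)
            qed
          qed
        qed
      qed
    qed
    then show False using P5f unfolding H_free_def by blast
  qed
qed

definition GV :: "nat set" where "GV = {0,1,2,3,4,5,6}"
definition GE :: "nat set set" where
  "GE = {{0,1},{0,2},{0,3},{1,2},{1,4},{3,5},{4,6},{5,6}}"

lemma GV_simple: "simple_graph GV GE"
proof -
  have h: "\<forall>p\<in>({(0,1),(0,2),(0,3),(1,2),(1,4),(3,5),(4,6),(5,6)}::(nat\<times>nat) set). fst p \<noteq> snd p \<and> fst p \<in> GV \<and> snd p \<in> GV"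
    by (simp add: GV_def)
  have eq: "GE = (\<lambda>p. {fst p, snd p}) ` ({(0,1),(0,2),(0,3),(1,2),(1,4),(3,5),(4,6),(5,6)}::(nat\<times>nat) set)" by (simp add: GE_def)
  show ?thesis unfolding simple_graph_def
  proof
    show "finite GV" by (simp add: GV_def)
    show "\<forall>e\<in>GE. \<exists>u v. e = {u, v} \<and> u \<noteq> v \<and> u \<in> GV \<and> v \<in> GV"
      unfolding eq using h by blast
  qed
qed

lemma small7: "(x::nat) < 7 \<Longrightarrow> x = 0 \<or> x = 1 \<or> x = 2 \<or> x = 3 \<or> x = 4 \<or> x = 5 \<or> x = 6"
  by auto

lemma suc7_inj: "(x::nat) < 7 \<Longrightarrow> y < 7 \<Longrightarrow> (x+1) mod 7 = (y+1) mod 7 \<Longrightarrow> x = y"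
  by (drule small7, drule small7) auto

lemma cyc7: assumes "{x,y} \<in> cycle_E 7" shows "y = (x+1) mod 7 \<or> x = (y+1) mod 7"
  using assms unfolding cycE by (auto simp: doubleton_eq_iff)

lemma GV_locf: "long_odd_cycle_free GV GE"
  unfolding long_odd_cycle_free_def H_free_def
proof (intro allI impI notI)
  fix l :: nat assume l3: "3 \<le> l" and h: "has_induced GV GE (cycle_V (2*l+1)) (cycle_E (2*l+1))"
  then obtain f where finj: "inj_on f {0..<2*l+1}" and fV: "f ` {0..<2*l+1} \<subseteq> GV"
    and fE0: "\<forall>x\<in>{0..<2*l+1}. \<forall>y\<in>{0..<2*l+1}. x \<noteq> y \<longrightarrow>
           ({f x, f y} \<in> GE \<longleftrightarrow> {x, y} \<in> cycle_E (2*l+1))"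
    unfolding has_induced_def cycle_V_def by (elim exE conjE) (rule that)
  have cardV: "card GV = 7" by (simp add: GV_def)
  have "card (f ` {0..<2*l+1}) = 2*l+1" using card_image[OF finj] by simp
  moreover have "card (f ` {0..<2*l+1}) \<le> 7" using card_mono[OF _ fV] cardV by (simp add: GV_def)
  ultimately have l: "l = 3" using l3 by simp
  have fimg: "f ` {0..<7} = GV"
  proof (rule card_subset_eq)
    show "finite GV" by (simp add: GV_def)
    show "f ` {0..<7} \<subseteq> GV" using fV l by simp
    show "card (f ` {0..<7}) = card GV" using card_image[OF finj] l cardV by simp
  qed
  have fE: "{f x, f y} \<in> GE \<Longrightarrow> x < 7 \<Longrightarrow> y < 7 \<Longrightarrow> x \<noteq> y \<Longrightarrow> y = (x+1) mod 7 \<or> x = (y+1) mod 7"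
    for x y using fE0 l cyc7[of x y] by auto
  have "0 \<in> f ` {0..<7}" using fimg by (simp add: GV_def)
  then obtain i where i: "i < 7" "f i = 0" by (metis atLeastLessThan_iff imageE)
  have "1 \<in> f ` {0..<7}" using fimg by (simp add: GV_def)
  then obtain j1 where j1: "j1 < 7" "f j1 = 1" by (metis atLeastLessThan_iff imageE)
  have "2 \<in> f ` {0..<7}" using fimg by (simp add: GV_def)
  then obtain j2 where j2: "j2 < 7" "f j2 = 2" by (metis atLeastLessThan_iff imageE)
  have "3 \<in> f ` {0..<7}" using fimg by (simp add: GV_def)
  then obtain j3 where j3: "j3 < 7" "f j3 = 3" by (metis atLeastLessThan_iff imageE)
  have d: "i \<noteq> j1" "i \<noteq> j2" "i \<noteq> j3" "j1 \<noteq> j2" "j1 \<noteq> j3" "j2 \<noteq> j3" using i j1 j2 j3 by auto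
  have e1: "j1 = (i+1) mod 7 \<or> i = (j1+1) mod 7" using fE[of i j1] i j1 d by (simp add: GE_def)
  have e2: "j2 = (i+1) mod 7 \<or> i = (j2+1) mod 7" using fE[of i j2] i j2 d by (simp add: GE_def)
  have e3: "j3 = (i+1) mod 7 \<or> i = (j3+1) mod 7" using fE[of i j3] i j3 d by (simp add: GE_def)
  have c12: "\<not> (j1 = (i+1) mod 7 \<and> j2 = (i+1) mod 7)" "\<not> (i = (j1+1) mod 7 \<and> i = (j2+1) mod 7)"
    using d suc7_inj[of j1 j2] j1 j2 by auto
  have c13: "\<not> (j1 = (i+1) mod 7 \<and> j3 = (i+1) mod 7)" "\<not> (i = (j1+1) mod 7 \<and> i = (j3+1) mod 7)"
    using d suc7_inj[of j1 j3] j1 j3 by auto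
  have c23: "\<not> (j2 = (i+1) mod 7 \<and> j3 = (i+1) mod 7)" "\<not> (i = (j2+1) mod 7 \<and> i = (j3+1) mod 7)"
    using d suc7_inj[of j2 j3] j2 j3 by auto
  show False using e1 e2 e3 c12 c13 c23 by blast
qed

lemma GV_not_probe: "\<not> probe_P5_free GV GE"
  unfolding probe_P5_free_def H_free_def
proof (intro notI, elim exE conjE)
  fix N F assume ind: "independent_set GV GE N"
    and Fs: "F \<subseteq> {{u, v} | u v. u \<in> N \<and> v \<in> N \<and> u \<noteq> v}"
    and nP: "\<not> has_induced GV (GE \<union> F) (path_V 5) (path_E 5)"
  have Fneg: "x \<in> N \<and> y \<in> N" if xy: "{x,y} \<in> F" for x y
  proof -
    obtain u v where uv: "{x,y} = {u,v}" "u \<in> N" "v \<in> N" using Fs xy by blast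
    have "x \<in> {u,v}" "y \<in> {u,v}" using uv(1) by blast+
    then show ?thesis using uv by blast
  qed
  have FnL: "\<And>x y. x \<notin> N \<Longrightarrow> {x,y} \<notin> F" and FnR: "\<And>x y. y \<notin> N \<Longrightarrow> {x,y} \<notin> F"
    using Fneg by blast+
  have indep: "\<And>u v. u \<in> N \<Longrightarrow> v \<in> N \<Longrightarrow> {u,v} \<notin> GE"
    using ind unfolding independent_set_def by blast
  have "has_induced GV (GE \<union> F) (path_V 5) (path_E 5)"
  proof (cases "0 \<in> N")
    case n0: True
    have n1: "1 \<notin> N" and n2: "2 \<notin> N" and n3: "3 \<notin> N"
      using indep[OF n0] by (auto simp: GE_def)
    show ?thesis
    proof (cases "{4,5} \<in> F")
      case True
      show ?thesis by (rule P5I[of 2 1 4 5 3]) (simp_all add: GV_def GE_def doubleton_eq_iff True n1 n1[simplified] n2 n3 FnL FnR)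
    next
      case False
      show ?thesis by (rule P5I[of 1 4 6 5 3]) (simp_all add: GV_def GE_def doubleton_eq_iff False n1 n1[simplified] n2 n3 FnL FnR)
    qed
  next
    case n0: False
    show ?thesis
    proof (cases "1 \<in> N")
      case n1: True
      have n2: "2 \<notin> N" and n4: "4 \<notin> N" using indep[OF n1] by (auto simp: GE_def)
      show ?thesis
      proof (cases "{3,6} \<in> F")
        case True
        show ?thesis by (rule P5I[of 2 0 3 6 4]) (simp_all add: GV_def GE_def doubleton_eq_iff True n0 n2 n4 FnL FnR)
      next
        case False
        show ?thesis by (rule P5I[of 0 3 5 6 4]) (simp_all add: GV_def GE_def doubleton_eq_iff False n0 n2 n4 FnL FnR)
      qed
    next
      case n1: False
      show ?thesis
      proof (cases "3 \<in> N")
        case n3: True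
        have n5: "5 \<notin> N" using indep[OF n3] by (auto simp: GE_def)
        show ?thesis by (rule P5I[of 0 1 4 6 5]) (simp_all add: GV_def GE_def doubleton_eq_iff n0 n1 n1[simplified] n5 FnL FnR)
      next
        case n3: False
        show ?thesis by (rule P5I[of 1 0 3 5 6]) (simp_all add: GV_def GE_def doubleton_eq_iff n0 n1 n1[simplified] n3 FnL FnR)
      qed
    qed
  qed
  then show False using nP by blast
qed

theorem mainTheorem10:
  shows "(\<forall>(V :: 'a set) E. simple_graph V E \<and> probe_P5_free V E \<longrightarrow> long_odd_cycle_free V E)
     \<and> (\<exists>(V :: nat set) E. simple_graph V E \<and> long_odd_cycle_free V E \<and> \<not> probe_P5_free V E)"
proof
  show "\<forall>(V :: 'a set) E. simple_graph V E \<and> probe_P5_free V E \<longrightarrow> long_odd_cycle_free V E"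
    using part1 by blast
  show "\<exists>(V :: nat set) E. simple_graph V E \<and> long_odd_cycle_free V E \<and> \<not> probe_P5_free V E"
    using GV_simple GV_locf GV_not_probe by blast
qed

end
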